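(* Let $(A,\leq,\cdot,/)$ be a right-residuated magma satisfying condition (N), and let $B\subseteq A$ be closed under $\sqcap$. The following are equivalent: (1) $(B,\sqcap)$ is a semilattice; (2) $\sqcap$ is commutative on $B$; (3) for all $x,y\in B$, $(x\sqcap y)\sqcap x = x\sqcap y$ and $x\sqcap y\leq y$.
   Context: Write $xy$ for $x\cdot y$; $\cdot$ binds more strongly than $/$, and $/$ binds more strongly than $\sqcap$, where $x\sqcap y := (x/y)y$. A right-residuated magma is a structure $(A,\leq,\cdot,/)$ where $(A,\leq)$ is a poset and $xy\leq z\iff x\leq z/y$ for all $x,y,z\in A$. Condition (N): for all $x,y\in A$, $x\leq y\iff x = y\sqcap x$. *)

theory Defs
  imports Main
begin

definition right_residuated :: "('a::order \<Rightarrow> 'a \<Rightarrow> 'a) \<Rightarrow> ('a \<Rightarrow> 'a \<Rightarrow> 'a) \<Rightarrow> bool" where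
  "right_residuated mult rdiv \<longleftrightarrow>
     (\<forall>x y z. mult x y \<le> z \<longleftrightarrow> x \<le> rdiv z y)"

definition meetop :: "('a \<Rightarrow> 'a \<Rightarrow> 'a) \<Rightarrow> ('a \<Rightarrow> 'a \<Rightarrow> 'a) \<Rightarrow> 'a \<Rightarrow> 'a \<Rightarrow> 'a" where
  "meetop mult rdiv x y = mult (rdiv x y) y"

definition condN :: "('a::order \<Rightarrow> 'a \<Rightarrow> 'a) \<Rightarrow> ('a \<Rightarrow> 'a \<Rightarrow> 'a) \<Rightarrow> bool" where
  "condN mult rdiv \<longleftrightarrow> (\<forall>x y. x \<le> y \<longleftrightarrow> x = meetop mult rdiv y x)"

definition closed_under :: "'a set \<Rightarrow> ('a \<Rightarrow> 'a \<Rightarrow> 'a) \<Rightarrow> bool" where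
  "closed_under B f \<longleftrightarrow> (\<forall>x\<in>B. \<forall>y\<in>B. f x y \<in> B)"

definition semilattice_on :: "'a set \<Rightarrow> ('a \<Rightarrow> 'a \<Rightarrow> 'a) \<Rightarrow> bool" where
  "semilattice_on B f \<longleftrightarrow>
     (\<forall>x\<in>B. \<forall>y\<in>B. \<forall>z\<in>B. f (f x y) z = f x (f y z)) \<and>
     (\<forall>x\<in>B. \<forall>y\<in>B. f x y = f y x) \<and>
     (\<forall>x\<in>B. f x x = x)"

end

theory Submission
  imports Defs
begin

lemma rr_le: "right_residuated m r \<Longrightarrow> meetop m r x y \<le> x"
  unfolding right_residuated_def meetop_def by blast

lemma rr_mono_div: "right_residuated m r \<Longrightarrow> x \<le> x' \<Longrightarrow> r x y \<le> r x' y"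
  unfolding right_residuated_def by (meson order_trans order_refl)

lemma rr_mono_mult: "right_residuated m r \<Longrightarrow> a \<le> b \<Longrightarrow> m a y \<le> m b y"
  unfolding right_residuated_def by (meson order_trans order_refl)

lemma rr_mono_meet: "right_residuated m r \<Longrightarrow> x \<le> x' \<Longrightarrow> meetop m r x y \<le> meetop m r x' y"
  unfolding meetop_def by (meson rr_mono_div rr_mono_mult)

theorem mainTheorem4:
  fixes mult rdiv :: "'a::order \<Rightarrow> 'a \<Rightarrow> 'a" and B :: "'a set"
  assumes "right_residuated mult rdiv"
    and "condN mult rdiv"
    and "closed_under B (meetop mult rdiv)"
  shows "(semilattice_on B (meetop mult rdiv)
            \<longleftrightarrow> (\<forall>x\<in>B. \<forall>y\<in>B. meetop mult rdiv x y = meetop mult rdiv y x))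
       \<and> ((\<forall>x\<in>B. \<forall>y\<in>B. meetop mult rdiv x y = meetop mult rdiv y x)
            \<longleftrightarrow> (\<forall>x\<in>B. \<forall>y\<in>B. meetop mult rdiv (meetop mult rdiv x y) x = meetop mult rdiv x y
                                 \<and> meetop mult rdiv x y \<le> y))"
proof -
  let ?f = "meetop mult rdiv"
  have R: "right_residuated mult rdiv" by fact
  have N: "\<And>x y. x \<le> y \<longleftrightarrow> x = ?f y x" using assms(2) unfolding condN_def by blast
  have C: "\<And>x y. x \<in> B \<Longrightarrow> y \<in> B \<Longrightarrow> ?f x y \<in> B" using assms(3) unfolding closed_under_def by blast
  have le: "\<And>x y. ?f x y \<le> x" using rr_le[OF R] .
  have mono: "\<And>x x' y. x \<le> x' \<Longrightarrow> ?f x y \<le> ?f x' y" using rr_mono_meet[OF R] .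
  have idem: "\<And>x. ?f x x = x" using N by (metis order_refl)
  have c23: "(\<forall>x\<in>B. \<forall>y\<in>B. ?f x y = ?f y x) \<longleftrightarrow>
     (\<forall>x\<in>B. \<forall>y\<in>B. ?f (?f x y) x = ?f x y \<and> ?f x y \<le> y)"
  proof
    assume com: "\<forall>x\<in>B. \<forall>y\<in>B. ?f x y = ?f y x"
    show "\<forall>x\<in>B. \<forall>y\<in>B. ?f (?f x y) x = ?f x y \<and> ?f x y \<le> y"
    proof (intro ballI conjI)
      fix x y assume xy: "x \<in> B" "y \<in> B"
      have "?f x y = ?f x (?f x y)" using N le by blast
      also have "\<dots> = ?f (?f x y) x" using com xy C by blast
      finally show "?f (?f x y) x = ?f x y" by simp
      show "?f x y \<le> y" using com xy le by metis
    qed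
  next
    assume h: "\<forall>x\<in>B. \<forall>y\<in>B. ?f (?f x y) x = ?f x y \<and> ?f x y \<le> y"
    have one: "?f x y \<le> ?f y x" if xy: "x \<in> B" "y \<in> B" for x y
    proof -
      have "?f x y = ?f (?f x y) x" using h xy by simp
      also have "\<dots> \<le> ?f y x" using mono h xy by blast
      finally show ?thesis .
    qed
    show "\<forall>x\<in>B. \<forall>y\<in>B. ?f x y = ?f y x"
      using one by (blast intro: order_antisym)
  qed
  have c12: "semilattice_on B ?f \<longleftrightarrow> (\<forall>x\<in>B. \<forall>y\<in>B. ?f x y = ?f y x)"
  proof
    assume "semilattice_on B ?f" thus "\<forall>x\<in>B. \<forall>y\<in>B. ?f x y = ?f y x"
      unfolding semilattice_on_def by blast
  next
    assume com: "\<forall>x\<in>B. \<forall>y\<in>B. ?f x y = ?f y x"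
    have le2: "?f x y \<le> y" if "x \<in> B" "y \<in> B" for x y using com le that by metis
    have glb: "z \<le> ?f x y" if "z \<in> B" "y \<in> B" "z \<le> x" "z \<le> y" for x y z
    proof -
      have "z = ?f y z" using N that by blast
      also have "\<dots> = ?f z y" using com that by blast
      also have "\<dots> \<le> ?f x y" using mono that by blast
      finally show ?thesis .
    qed
    have assoc: "?f (?f x y) z = ?f x (?f y z)" if xyz: "x \<in> B" "y \<in> B" "z \<in> B" for x y z
    proof (rule order_antisym)
      have a: "?f (?f x y) z \<le> ?f x y" "?f (?f x y) z \<le> z" using le le2 C xyz by auto
      have b: "?f x y \<le> x" "?f x y \<le> y" using le le2 xyz by auto
      have "?f (?f x y) z \<le> ?f y z" using glb[of "?f (?f x y) z" z y] a b C xyz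
        by (meson order_trans)
      thus "?f (?f x y) z \<le> ?f x (?f y z)"
        using glb[of "?f (?f x y) z" "?f y z" x] a b C xyz by (meson order_trans)
      have d: "?f x (?f y z) \<le> x" "?f x (?f y z) \<le> ?f y z" using le le2 C xyz by auto
      have e: "?f y z \<le> y" "?f y z \<le> z" using le le2 xyz by auto
      have "?f x (?f y z) \<le> ?f x y" using glb[of "?f x (?f y z)" y x] d e C xyz
        by (meson order_trans)
      thus "?f x (?f y z) \<le> ?f (?f x y) z"
        using glb[of "?f x (?f y z)" z "?f x y"] d e C xyz by (meson order_trans)
    qed
    show "semilattice_on B ?f" unfolding semilattice_on_def using assoc com idem by blast
  qed
  show ?thesis using c12 c23 by blast
qed

end
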